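(* Assume $\sigma^2=0$, and let $g(\underline\phi)=\sum_{(l,k)}\alpha_{lk}\beta_{llk}^2\phi_{lk}^HD_l^{-1}\phi_{lk}$ with $D_l=\sum_{(i,j)}\beta_{lij}\phi_{ij}\phi_{ij}^H$, defined on the open set of pilot collections for which every $D_l$ is invertible. Let $\underline{\tilde\phi}$ be a stationary point of $g$ (unconstrained, i.e. with zero gradient) in this set with every $\tilde\phi_{lk}\neq 0$, and set $\delta=\min_{(l,k)}\sqrt{\tau P_{\max}}/\|\tilde\phi_{lk}\|$ and $\phi^\star_{lk}=\delta\tilde\phi_{lk}$ for all $(l,k)$. Then $\underline\phi^\star$ satisfies $\|\phi^\star_{lk}\|^2\le\tau P_{\max}$ for all $(l,k)$ and is a stationary (KKT) point of the problem of maximizing $g$ subject to $\|\phi_{lk}\|^2\le\tau P_{\max}$ for all $(l,k)$.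
   Context: $L$ cells indexed by $l,i$, each with $K$ users indexed by $k,j$; sums over $(i,j)$ or $(l,k)$ range over all $LK$ users. Pilot length $\tau$, power budget $P_{\max}>0$, large-scale fading coefficients $\beta_{lij}>0$, weights $\alpha_{lk}>0$, pilots $\phi_{lk}\in\mathbb C^\tau$. *)

theory Defs
  imports "HOL-Analysis.Analysis"
begin

text \<open>Cells are indexed by the finite type 'c (L = CARD('c)), users within a cell by the
finite type 'u (K = CARD('u)); a user is a pair (l,k) :: 'c \<times> 'u. Pilots live in
complex ^ 't with tau = CARD('t). A pilot collection is Phi :: (complex ^ 't) ^ ('c \<times> 'u),
with Phi $ (l,k) the pilot of user k in cell l. beta l (i,j) is beta_{lij}.\<close>

definition Dmat :: "('c::finite \<Rightarrow> 'c \<times> 'u::finite \<Rightarrow> real) \<Rightarrow> (complex ^ 't::finite) ^ ('c \<times> 'u) \<Rightarrow> 'c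
    \<Rightarrow> complex ^ 't ^ 't" where
  "Dmat beta Phi l = (\<chi> a b. \<Sum>ij\<in>UNIV. complex_of_real (beta l ij) * (Phi $ ij $ a) * cnj (Phi $ ij $ b))"

definition herm_form :: "complex ^ 't::finite \<Rightarrow> complex ^ 't ^ 't \<Rightarrow> complex ^ 't \<Rightarrow> complex" where
  "herm_form x M y = (\<Sum>a\<in>UNIV. \<Sum>b\<in>UNIV. cnj (x $ a) * (M $ a $ b) * (y $ b))"

text \<open>The objective g (with sigma^2 = 0). The quantity is real on the domain where every
D_l is invertible (D_l Hermitian positive definite); we take its real part.\<close>
definition gobj :: "('c::finite \<times> 'u::finite \<Rightarrow> real) \<Rightarrow> ('c \<Rightarrow> 'c \<times> 'u \<Rightarrow> real)
    \<Rightarrow> (complex ^ 't::finite) ^ ('c \<times> 'u) \<Rightarrow> real" where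
  "gobj alpha beta Phi = (\<Sum>lk\<in>UNIV. alpha lk * (beta (fst lk) lk)^2 *
       Re (herm_form (Phi $ lk) (matrix_inv (Dmat beta Phi (fst lk))) (Phi $ lk)))"

definition gdomain :: "('c::finite \<Rightarrow> 'c \<times> 'u::finite \<Rightarrow> real) \<Rightarrow> ((complex ^ 't::finite) ^ ('c \<times> 'u)) set" where
  "gdomain beta = {Phi. \<forall>l. invertible (Dmat beta Phi l)}"

definition KKT_point_max :: "('v::real_normed_vector \<Rightarrow> real) \<Rightarrow> ('i::finite \<Rightarrow> 'v \<Rightarrow> real) \<Rightarrow> 'v \<Rightarrow> bool" where
  "KKT_point_max f c x \<longleftrightarrow> (\<forall>i. c i x \<le> 0) \<and>
     (\<exists>mu::'i \<Rightarrow> real. (\<forall>i. mu i \<ge> 0) \<and> (\<forall>i. mu i * c i x = 0) \<and>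
        ((\<lambda>y. f y - (\<Sum>i\<in>UNIV. mu i * c i y)) has_derivative (\<lambda>h. 0)) (at x))"

definition power_constr :: "real \<Rightarrow> real \<Rightarrow> 'c::finite \<times> 'u::finite \<Rightarrow> (complex ^ 't::finite) ^ ('c \<times> 'u) \<Rightarrow> real" where
  "power_constr tau Pmax lk Phi = (norm (Phi $ lk))^2 - tau * Pmax"

end

theory Submission imports Defs begin

lemma cscale: "c *\<^sub>R (z::complex) = of_real c * z" by (simp add: scaleR_conv_of_real)

lemma Dmat_scale: "Dmat beta (c *\<^sub>R Phi) l = (c^2) *\<^sub>R Dmat beta Phi l"
  unfolding Dmat_def vec_eq_iff
  by (simp add: sum_distrib_left algebra_simps power2_eq_square cscale)

lemma matrix_inv_unique:
  fixes A :: "'a::comm_ring_1^'n::finite^'n"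
  assumes "A ** B = mat 1" "B ** A = mat 1"
  shows "matrix_inv A = B"
proof -
  have ex: "A ** matrix_inv A = mat 1 \<and> matrix_inv A ** A = mat 1"
    unfolding matrix_inv_def by (rule someI[of _ B]) (use assms in auto)
  have "matrix_inv A = (B ** A) ** matrix_inv A" using assms by (simp add: matrix_mul_lid)
  also have "\<dots> = B ** (A ** matrix_inv A)" by (simp add: matrix_mul_assoc)
  also have "\<dots> = B" using ex by (simp add: matrix_mul_rid)
  finally show ?thesis .
qed

lemma matrix_inv_scale:
  fixes A :: "complex^'n::finite^'n"
  assumes "invertible A" "k \<noteq> 0"
  shows "invertible (k *\<^sub>R A) \<and> matrix_inv (k *\<^sub>R A) = (1/k) *\<^sub>R matrix_inv A"
proof -
  obtain B where B: "A ** B = mat 1" "B ** A = mat 1" using assms(1) unfolding invertible_def by blast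
  have mi: "matrix_inv A = B" using matrix_inv_unique[OF B] .
  have 1: "(k *\<^sub>R A) ** ((1/k) *\<^sub>R B) = mat 1"
    using assms(2) by (simp add: matrix_scalar_ac B flip: scalar_matrix_assoc)
  have 2: "((1/k) *\<^sub>R B) ** (k *\<^sub>R A) = mat 1"
    using assms(2) by (simp add: matrix_scalar_ac B flip: scalar_matrix_assoc)
  show ?thesis using 1 2 mi matrix_inv_unique[OF 1 2] unfolding invertible_def by blast
qed

lemma herm_scale: "herm_form (c *\<^sub>R x) ((1/c^2) *\<^sub>R M) (c *\<^sub>R x) = (if c = 0 then 0 else herm_form x M x)"
  unfolding herm_form_def
  by (simp add: cscale sum_distrib_left power2_eq_square field_simps)

lemma dom_scale: "Phi \<in> gdomain beta \<Longrightarrow> c \<noteq> 0 \<Longrightarrow> c *\<^sub>R Phi \<in> gdomain beta"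
  unfolding gdomain_def using matrix_inv_scale[of "Dmat beta Phi _" "c^2"] by (simp add: Dmat_scale)

lemma gobj_scale:
  assumes "Phi \<in> gdomain beta" "c \<noteq> 0"
  shows "gobj alpha beta (c *\<^sub>R Phi) = gobj alpha beta Phi"
proof -
  have A: "\<And>l. matrix_inv (Dmat beta (c *\<^sub>R Phi) l) = (1/c^2) *\<^sub>R matrix_inv (Dmat beta Phi l)"
    using assms matrix_inv_scale[of "Dmat beta Phi _" "c^2"] unfolding gdomain_def
    by (simp add: Dmat_scale)
  have B: "\<And>x M. herm_form (c *\<^sub>R x) ((1/c^2) *\<^sub>R M) (c *\<^sub>R x) = herm_form x M x"
    using herm_scale[of c] assms(2) by simp
  show ?thesis unfolding gobj_def vector_scaleR_component by (simp only: A B)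
qed

lemma open_dom: "open (gdomain beta)"
proof -
  have E: "gdomain beta = (\<Inter>l. {Phi. det (Dmat beta Phi l) \<noteq> 0})"
    unfolding gdomain_def by (auto simp: invertible_det_nz)
  have O: "open {Phi. det (Dmat beta Phi l) \<noteq> 0}" for l
  proof (rule open_Collect_neq)
    show "continuous_on UNIV (\<lambda>Phi. det (Dmat beta Phi l))"
      unfolding det_def Dmat_def by (auto intro!: continuous_intros)
  qed (rule continuous_on_const)
  have "open (\<Inter>l. {Phi. det (Dmat beta Phi l) \<noteq> 0})"
    by (rule open_INT) (use O in auto)
  then show ?thesis unfolding E .
qed
theorem proposition3:
  fixes alpha :: "'c::finite \<times> 'u::finite \<Rightarrow> real"
    and beta :: "'c \<Rightarrow> 'c \<times> 'u \<Rightarrow> real"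
    and Pmax :: real
    and Phit :: "(complex ^ 't::finite) ^ ('c \<times> 'u)"
  assumes Pmax_pos: "Pmax > 0"
    and beta_pos: "\<And>l ij. beta l ij > 0"
    and alpha_pos: "\<And>lk. alpha lk > 0"
    and in_dom: "Phit \<in> gdomain beta"
    and stationary: "(gobj alpha beta has_derivative (\<lambda>h. 0)) (at Phit)"
    and nonzero: "\<And>lk. Phit $ lk \<noteq> 0"
  defines "Phis \<equiv> Min (range (\<lambda>lk. sqrt (real CARD('t) * Pmax) / norm (Phit $ lk))) *\<^sub>R Phit"
  shows "(\<forall>lk. (norm (Phis $ lk))^2 \<le> real CARD('t) * Pmax) \<and>
         KKT_point_max (gobj alpha beta) (power_constr (real CARD('t)) Pmax) Phis"
proof -
  let ?F = "\<lambda>lk. sqrt (real CARD('t) * Pmax) / norm (Phit $ lk)"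
  define d where "d = Min (range ?F)"
  have Phis: "Phis = d *\<^sub>R Phit" unfolding Phis_def d_def ..
  have fin: "finite (range ?F)" by simp
  have dle: "d \<le> ?F lk" for lk unfolding d_def using fin by (intro Min_le) auto
  have "d \<in> range ?F" unfolding d_def using fin by (intro Min_in) auto
  then obtain lk0 where "d = ?F lk0" by blast
  moreover have "?F lk0 > 0" using nonzero Pmax_pos by (simp add: field_simps)
  ultimately have dpos: "d > 0" by simp
  have tP: "real CARD('t) * Pmax \<ge> 0" using Pmax_pos by simp
  have feas: "(norm (Phis $ lk))^2 \<le> real CARD('t) * Pmax" for lk
  proof -
    have nz: "norm (Phit $ lk) > 0" using nonzero by simp
    have "norm (Phis $ lk) = d * norm (Phit $ lk)" using dpos by (simp add: Phis)
    also have "\<dots> \<le> sqrt (real CARD('t) * Pmax)"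
      using dle[of lk] nz by (simp add: field_simps)
    finally have "norm (Phis $ lk) \<le> sqrt (real CARD('t) * Pmax)" .
    then have "(norm (Phis $ lk))^2 \<le> (sqrt (real CARD('t) * Pmax))^2"
      by (intro power_mono) auto
    then show ?thesis using tP by simp
  qed
  have PhisD: "Phis \<in> gdomain beta" using dom_scale[OF in_dom, of d] dpos Phis by simp
  have bk: "(\<lambda>y. (1/d) *\<^sub>R y) Phis = Phit" using dpos Phis by simp
  have lin: "((\<lambda>y. (1/d) *\<^sub>R y) has_derivative (\<lambda>y. (1/d) *\<^sub>R y)) (at Phis)"
    by (intro derivative_intros)
  have comp: "((gobj alpha beta \<circ> (\<lambda>y. (1/d) *\<^sub>R y)) has_derivative ((\<lambda>h. 0) \<circ> (\<lambda>y. (1/d) *\<^sub>R y))) (at Phis)"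
    by (rule diff_chain_at[OF lin]) (use stationary bk in simp)
  have eq: "(gobj alpha beta \<circ> (\<lambda>y. (1/d) *\<^sub>R y)) y = gobj alpha beta y" if "y \<in> gdomain beta" for y
  proof -
    have yd: "(1/d) *\<^sub>R y \<in> gdomain beta" using dom_scale[OF that, of "1/d"] dpos by simp
    have "gobj alpha beta (d *\<^sub>R ((1/d) *\<^sub>R y)) = gobj alpha beta ((1/d) *\<^sub>R y)"
      using gobj_scale[OF yd, of d] dpos by simp
    then show ?thesis using dpos by simp
  qed
  have der: "(gobj alpha beta has_derivative (\<lambda>h. 0)) (at Phis)"
    using has_derivative_transform_within_open[OF comp open_dom PhisD eq] by (simp add: o_def)
  show ?thesis unfolding KKT_point_max_def power_constr_def
  proof (intro conjI allI exI[of _ "\<lambda>_. 0"])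
    show "\<And>lk. (norm (Phis $ lk))^2 \<le> real CARD('t) * Pmax" by (rule feas)
    then show "\<And>i. (norm (Phis $ i))^2 - real CARD('t) * Pmax \<le> 0" by (simp add: feas)
  qed (use der in auto)
qed

end
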